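(* If $d:\mathcal{A}\to A$ is a derivation, then $d(\mathcal{A}\cap\mathcal{K})\subseteq\mathcal{K}$.
   Context: Setup: $G$ is an infinite compact (Hausdorff) abelian group, written additively, and $x_1\in G$ generates a dense cyclic subgroup; $x_n=nx_1$. $\widehat G$ is the group of continuous characters. Let $H_+=\ell^2(\mathbb{Z}_{\ge 0})$ with canonical basis $\{E_k^+\}$; $UE_k^+=E_{k+1}^+$, $M^+_fE^+_k=f(x_k)E^+_k$. $A=C^*(U,M^+_f:f\in C(G))$, $\mathcal{A}$ is the $*$-subalgebra generated by $U,U^*,M^+_\chi$ ($\chi\in\widehat G$), and $\mathcal{K}$ is the algebra of compact operators on $H_+$. A derivation is a linear map $d:\mathcal{A}\to A$ with $d(ab)=ad(b)+d(a)b$. *)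

theory Defs
  imports "HOL-Analysis.Analysis"
begin

type_synonym vec = "nat \<Rightarrow> complex"

text \<open>Bounded operators on H+ are modelled as functions vec => vec that are linear and
  bounded on l2, map l2 into l2, and are normalised to be 0 outside l2 (so that equality
  of functions is equality of operators).\<close>
type_synonym op = "vec \<Rightarrow> vec"

definition l2 :: "vec set" where
  "l2 = {v. summable (\<lambda>k. (cmod (v k))\<^sup>2)}"

definition l2norm :: "vec \<Rightarrow> real" where
  "l2norm v = sqrt (\<Sum>k. (cmod (v k))\<^sup>2)"

definition l2inner :: "vec \<Rightarrow> vec \<Rightarrow> complex" where
  "l2inner u v = (\<Sum>k. cnj (u k) * v k)"

definition zerovec :: vec where "zerovec = (\<lambda>_. 0)"

definition bounded_op :: "op \<Rightarrow> bool" where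
  "bounded_op T \<longleftrightarrow>
     (\<forall>u\<in>l2. T u \<in> l2) \<and>
     (\<forall>u\<in>l2. \<forall>v\<in>l2. \<forall>c::complex. T (\<lambda>k. u k + c * v k) = (\<lambda>k. T u k + c * T v k)) \<and>
     (\<exists>C. \<forall>u\<in>l2. l2norm (T u) \<le> C * l2norm u) \<and>
     (\<forall>u. u \<notin> l2 \<longrightarrow> T u = zerovec)"

definition op_add :: "op \<Rightarrow> op \<Rightarrow> op" where
  "op_add S T = (\<lambda>v k. S v k + T v k)"

definition op_diff :: "op \<Rightarrow> op \<Rightarrow> op" where
  "op_diff S T = (\<lambda>v k. S v k - T v k)"

definition op_scale :: "complex \<Rightarrow> op \<Rightarrow> op" where
  "op_scale c T = (\<lambda>v k. c * T v k)"

definition op_mult :: "op \<Rightarrow> op \<Rightarrow> op" where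
  "op_mult S T = S \<circ> T"

definition opnorm :: "op \<Rightarrow> real" where
  "opnorm T = Sup {l2norm (T u) | u. u \<in> l2 \<and> l2norm u \<le> 1}"

definition adjoint :: "op \<Rightarrow> op" where
  "adjoint T = (THE S. bounded_op S \<and>
      (\<forall>u\<in>l2. \<forall>v\<in>l2. l2inner (S u) v = l2inner u (T v)))"

definition compact_op :: "op \<Rightarrow> bool" where
  "compact_op T \<longleftrightarrow> bounded_op T \<and>
     (\<forall>u::nat \<Rightarrow> vec. (\<forall>n. u n \<in> l2 \<and> l2norm (u n) \<le> 1) \<longrightarrow>
        (\<exists>r w. strict_mono r \<and> w \<in> l2 \<and>
              (\<lambda>n. l2norm (\<lambda>k. T (u (r n)) k - w k)) \<longlonglongrightarrow> 0))"

definition compact_ops :: "op set" where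
  "compact_ops = {T. compact_op T}"

definition shift :: op where
  "shift v = (if v \<in> l2 then (\<lambda>k. if k = 0 then 0 else v (k - 1)) else zerovec)"

definition mult_op :: "('g \<Rightarrow> complex) \<Rightarrow> (nat \<Rightarrow> 'g) \<Rightarrow> op" where
  "mult_op f x v = (if v \<in> l2 then (\<lambda>k. f (x k) * v k) else zerovec)"

inductive_set star_alg_gen :: "op set \<Rightarrow> op set" for S :: "op set" where
  gen: "T \<in> S \<Longrightarrow> T \<in> star_alg_gen S"
| add: "T \<in> star_alg_gen S \<Longrightarrow> T' \<in> star_alg_gen S \<Longrightarrow> op_add T T' \<in> star_alg_gen S"
| scale: "T \<in> star_alg_gen S \<Longrightarrow> op_scale c T \<in> star_alg_gen S"
| mult: "T \<in> star_alg_gen S \<Longrightarrow> T' \<in> star_alg_gen S \<Longrightarrow> op_mult T T' \<in> star_alg_gen S"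
| adj: "T \<in> star_alg_gen S \<Longrightarrow> adjoint T \<in> star_alg_gen S"

definition cstar_gen :: "op set \<Rightarrow> op set" where
  "cstar_gen S = {T. bounded_op T \<and>
      (\<forall>e>0. \<exists>a\<in>star_alg_gen S. opnorm (op_diff T a) < e)}"

definition natmul :: "nat \<Rightarrow> 'g::monoid_add \<Rightarrow> 'g" where
  "natmul n x = (((+) x) ^^ n) 0"

definition intmul :: "int \<Rightarrow> 'g::group_add \<Rightarrow> 'g" where
  "intmul k x = (if k \<ge> 0 then natmul (nat k) x else - natmul (nat (- k)) x)"

definition character :: "('g::topological_ab_group_add \<Rightarrow> complex) \<Rightarrow> bool" where
  "character chi \<longleftrightarrow> continuous_on UNIV chi \<and> (\<forall>a. cmod (chi a) = 1) \<and>
     (\<forall>a b. chi (a + b) = chi a * chi b)"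

definition alg_A :: "'g::topological_ab_group_add \<Rightarrow> op set" where
  "alg_A x1 = cstar_gen ({shift} \<union>
      {mult_op f (\<lambda>n. natmul n x1) | f :: 'g \<Rightarrow> complex. continuous_on UNIV f})"

definition alg_calA :: "'g::topological_ab_group_add \<Rightarrow> op set" where
  "alg_calA x1 = star_alg_gen ({shift, adjoint shift} \<union>
      {mult_op chi (\<lambda>n. natmul n x1) | chi :: 'g \<Rightarrow> complex. character chi})"

definition is_derivation :: "op set \<Rightarrow> op set \<Rightarrow> (op \<Rightarrow> op) \<Rightarrow> bool" where
  "is_derivation D B d \<longleftrightarrow>
     (\<forall>a\<in>D. d a \<in> B) \<and>
     (\<forall>a\<in>D. \<forall>b\<in>D. d (op_add a b) = op_add (d a) (d b)) \<and>
     (\<forall>a\<in>D. \<forall>c. d (op_scale c a) = op_scale c (d a)) \<and>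
     (\<forall>a\<in>D. \<forall>b\<in>D. d (op_mult a b) = op_add (op_mult a (d b)) (op_mult (d a) b))"

end

theory Submission
  imports Defs
begin


lemma sq_sum_list_le:
  fixes g :: "'a \<Rightarrow> complex"
  shows "(cmod (\<Sum>t\<leftarrow>xs. g t))^2 \<le> real (length xs) * (\<Sum>t\<leftarrow>xs. (cmod (g t))^2)"
proof (induction xs)
  case Nil then show ?case by simp
next
  case (Cons x xs)
  define a where "a = cmod (g x)"
  define S where "S = cmod (\<Sum>t\<leftarrow>xs. g t)"
  define Q where "Q = (\<Sum>t\<leftarrow>xs. (cmod (g t))^2)"
  define n where "n = real (length xs)"
  have IH: "S^2 \<le> n * Q" using Cons unfolding S_def n_def Q_def by simp
  have a0: "a \<ge> 0" "S \<ge> 0" "n \<ge> 0" unfolding a_def S_def n_def by auto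
  have Q0: "Q \<ge> 0" unfolding Q_def by (induction xs) auto
  have tri: "cmod (\<Sum>t\<leftarrow>x#xs. g t) \<le> a + S" unfolding a_def S_def by (simp add: norm_triangle_ineq)
  have key: "(a + S)^2 \<le> (n+1) * (a^2 + Q)"
  proof (cases "n = 0")
    case True then have "S = 0" using IH a0 by simp
    then show ?thesis using True Q0 a0 by simp
  next
    case False
    then have np: "n > 0" using a0 by simp
    have "n * ((n+1) * (a^2 + Q) - (a + S)^2) \<ge> (n*a - S)^2"
    proof -
      have "n * ((n+1) * (a^2 + Q) - (a + S)^2) = n^2*a^2 + (n+1)*(n*Q) - 2*n*a*S - n*S^2"
        by (simp add: power2_eq_square algebra_simps)
      also have "\<dots> \<ge> n^2*a^2 + (n+1)*S^2 - 2*n*a*S - n*S^2"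
        using IH a0 by (simp add: mult_left_mono)
      finally show ?thesis by (simp add: power2_eq_square algebra_simps)
    qed
    then have "n * ((n+1) * (a^2 + Q) - (a + S)^2) \<ge> 0" by (smt (verit) zero_le_power2)
    then show ?thesis using np by (simp add: zero_le_mult_iff)
  qed
  have "(cmod (\<Sum>t\<leftarrow>x#xs. g t))^2 \<le> (a+S)^2"
    using tri by (simp add: power_mono)
  also have "\<dots> \<le> (n+1) * (a^2 + Q)" by (rule key)
  finally show ?case unfolding n_def a_def Q_def by (simp add: add.commute)
qed

lemma sum_list_suminf:
  fixes f :: "'a \<Rightarrow> nat \<Rightarrow> 'b::{real_normed_vector}"
  assumes "\<And>t. t \<in> set xs \<Longrightarrow> summable (f t)"
  shows "summable (\<lambda>i. \<Sum>t\<leftarrow>xs. f t i) \<and> (\<Sum>i. \<Sum>t\<leftarrow>xs. f t i) = (\<Sum>t\<leftarrow>xs. \<Sum>i. f t i)"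
  using assms
proof (induction xs)
  case Nil then show ?case by simp
next
  case (Cons x xs)
  then have s1: "summable (f x)" and s2: "summable (\<lambda>i. \<Sum>t\<leftarrow>xs. f t i)"
    and e2: "(\<Sum>i. \<Sum>t\<leftarrow>xs. f t i) = (\<Sum>t\<leftarrow>xs. \<Sum>i. f t i)" by auto
  show ?case using summable_add[OF s1 s2] suminf_add[OF s1 s2] e2 by simp
qed

section \<open>l2 basics\<close>

lemma l2_iff: "v \<in> l2 \<longleftrightarrow> summable (\<lambda>k. (cmod (v k))\<^sup>2)"
  by (simp add: l2_def)

lemma zerovec_l2[simp]: "zerovec \<in> l2"
  by (simp add: l2_def zerovec_def)

lemma suminf_sq_nonneg: assumes "v \<in> l2" shows "(\<Sum>k. (cmod (v k))\<^sup>2) \<ge> 0"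
  using assms unfolding l2_iff by (simp add: suminf_nonneg)

lemma l2norm_nonneg: "v \<in> l2 \<Longrightarrow> l2norm v \<ge> 0"
  unfolding l2norm_def using suminf_sq_nonneg by simp

lemma l2norm_sq: assumes "v \<in> l2" shows "(l2norm v)^2 = (\<Sum>k. (cmod (v k))\<^sup>2)"
  unfolding l2norm_def using suminf_sq_nonneg[OF assms] by simp

lemma sqbound: "(cmod (a + b))^2 \<le> 2 * (cmod a)^2 + 2 * (cmod b)^2"
proof -
  have "cmod (a+b) \<le> cmod a + cmod b" by (rule norm_triangle_ineq)
  then have "(cmod (a + b))^2 \<le> (cmod a + cmod b)^2" by (simp add: power_mono)
  also have "\<dots> \<le> 2 * (cmod a)^2 + 2 * (cmod b)^2"
    by (smt (verit) power2_sum zero_le_power2 power2_diff)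
  finally show ?thesis .
qed

lemma l2_lin:
  assumes "u \<in> l2" "v \<in> l2"
  shows "(\<lambda>k. u k + c * v k) \<in> l2"
    and "(\<Sum>k. (cmod (u k + c * v k))\<^sup>2) \<le> 2 * (\<Sum>k. (cmod (u k))\<^sup>2) + 2 * (cmod c)^2 * (\<Sum>k. (cmod (v k))\<^sup>2)"
proof -
  have su: "summable (\<lambda>k. (cmod (u k))\<^sup>2)" and sv: "summable (\<lambda>k. (cmod (v k))\<^sup>2)"
    using assms by (auto simp: l2_iff)
  have sg: "summable (\<lambda>k. 2 * (cmod (u k))\<^sup>2 + 2 * (cmod c)^2 * (cmod (v k))\<^sup>2)"
    using su sv by (intro summable_add summable_mult) auto
  have le: "(cmod (u k + c * v k))\<^sup>2 \<le> 2 * (cmod (u k))\<^sup>2 + 2 * (cmod c)^2 * (cmod (v k))\<^sup>2" for k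
    using sqbound[of "u k" "c * v k"] by (simp add: norm_mult power_mult_distrib)
  have s: "summable (\<lambda>k. (cmod (u k + c * v k))\<^sup>2)"
    by (rule summable_comparison_test'[OF sg]) (use le in auto)
  then show "(\<lambda>k. u k + c * v k) \<in> l2" by (simp add: l2_iff)
  have "(\<Sum>k. (cmod (u k + c * v k))\<^sup>2) \<le> (\<Sum>k. 2 * (cmod (u k))\<^sup>2 + 2 * (cmod c)^2 * (cmod (v k))\<^sup>2)"
    by (rule suminf_le[OF le s sg])
  also have "\<dots> = 2 * (\<Sum>k. (cmod (u k))\<^sup>2) + 2 * (cmod c)^2 * (\<Sum>k. (cmod (v k))\<^sup>2)"
    using su sv by (simp add: suminf_add[symmetric] suminf_mult summable_mult)
  finally show "(\<Sum>k. (cmod (u k + c * v k))\<^sup>2) \<le> 2 * (\<Sum>k. (cmod (u k))\<^sup>2) + 2 * (cmod c)^2 * (\<Sum>k. (cmod (v k))\<^sup>2)" .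
qed

lemma l2norm_lin_le:
  assumes "u \<in> l2" "v \<in> l2"
  shows "l2norm (\<lambda>k. u k + c * v k) \<le> 2 * (l2norm u + cmod c * l2norm v)"
proof -
  have "(l2norm (\<lambda>k. u k + c * v k))^2 \<le> 2 * (l2norm u)^2 + 2 * (cmod c)^2 * (l2norm v)^2"
    using l2_lin[OF assms, of c] by (simp add: l2norm_sq assms)
  also have "\<dots> \<le> (2 * (l2norm u + cmod c * l2norm v))^2"
    using l2norm_nonneg[OF assms(1)] l2norm_nonneg[OF assms(2)] norm_ge_zero[of c]
    by (simp add: power2_eq_square algebra_simps)
  finally show ?thesis
    using l2norm_nonneg[OF assms(1)] l2norm_nonneg[OF assms(2)] norm_ge_zero[of c]
    by (meson power2_le_imp_le mult_nonneg_nonneg add_nonneg_nonneg zero_le_numeral)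
qed

lemma l2_coord_le:
  assumes "v \<in> l2" shows "cmod (v i) \<le> l2norm v"
proof -
  have "(cmod (v i))^2 = (\<Sum>k\<in>{i}. (cmod (v k))\<^sup>2)" by simp
  also have "\<dots> \<le> (\<Sum>k. (cmod (v k))\<^sup>2)"
    by (rule sum_le_suminf) (use assms in \<open>auto simp: l2_iff\<close>)
  finally have "(cmod (v i))^2 \<le> (l2norm v)^2" using l2norm_sq[OF assms] by simp
  then show ?thesis using l2norm_nonneg[OF assms] by (meson power2_le_imp_le)
qed

definition E :: "nat \<Rightarrow> vec" where "E j = (\<lambda>k. if k = j then 1 else 0)"

lemma E_l2: "E j \<in> l2" and E_norm: "l2norm (E j) = 1"
proof -
  have "(\<lambda>k. (cmod (E j k))\<^sup>2) = (\<lambda>k. if k = j then 1 else 0)" by (auto simp: E_def)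
  moreover have "(\<lambda>k. if k = j then (1::real) else 0) sums 1" using sums_single[of j "\<lambda>_. 1::real"] by simp
  ultimately show "E j \<in> l2" "l2norm (E j) = 1"
    by (auto simp: l2_iff l2norm_def sums_iff)
qed



definition tm :: "nat \<Rightarrow> nat \<Rightarrow> complex \<Rightarrow> vec \<Rightarrow> vec" where
  "tm n m l v = (\<lambda>i. if n \<le> i then l ^ (i - n) * v (i - n + m) else 0)"

lemma shift_sum_le:
  fixes f :: "nat \<Rightarrow> real"
  assumes s: "summable f" and nn: "\<And>k. f k \<ge> 0"
  shows "summable (\<lambda>i. if n \<le> i then f (i - n + m) else 0)"
    and "(\<Sum>i. if n \<le> i then f (i - n + m) else 0) \<le> suminf f"
proof -
  define h where "h = (\<lambda>i. if n \<le> i then f (i - n + m) else 0)"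
  have hs: "(\<lambda>i. h (i + n)) = (\<lambda>i. f (i + m))" by (auto simp: h_def)
  have sfm: "summable (\<lambda>i. f (i + m))" using s by simp
  then have sh: "summable h" using hs summable_iff_shift[of h n] by simp
  then show "summable (\<lambda>i. if n \<le> i then f (i - n + m) else 0)" by (simp add: h_def)
  have "suminf h = (\<Sum>i. h (i + n)) + (\<Sum>i<n. h i)" by (rule suminf_split_initial_segment[OF sh])
  also have "(\<Sum>i<n. h i) = 0" by (auto simp: h_def)
  finally have "suminf h = (\<Sum>i. f (i + m))" using hs by simp
  also have "\<dots> \<le> suminf f"
  proof -
    have "suminf f = (\<Sum>i. f (i + m)) + (\<Sum>i<m. f i)" by (rule suminf_split_initial_segment[OF s])
    moreover have "(\<Sum>i<m. f i) \<ge> 0" using nn by (simp add: sum_nonneg)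
    ultimately show ?thesis by simp
  qed
  finally show "(\<Sum>i. if n \<le> i then f (i - n + m) else 0) \<le> suminf f" by (simp add: h_def)
qed

lemma tm_l2:
  assumes v: "v \<in> l2" and l: "cmod l \<le> 1"
  shows "tm n m l v \<in> l2" and "(\<Sum>i. (cmod (tm n m l v i))\<^sup>2) \<le> (\<Sum>k. (cmod (v k))\<^sup>2)"
proof -
  define f where "f = (\<lambda>k. (cmod (v k))\<^sup>2)"
  have sf: "summable f" using v by (simp add: l2_iff f_def)
  have nn: "\<And>k. f k \<ge> 0" by (simp add: f_def)
  note S = shift_sum_le[OF sf nn, of n m]
  have le: "(cmod (tm n m l v i))\<^sup>2 \<le> (if n \<le> i then f (i - n + m) else 0)" for i
  proof (cases "n \<le> i")
    case True
    have "cmod (l ^ (i - n)) \<le> 1" using l by (simp add: norm_power power_le_one)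
    then have "cmod (l ^ (i - n) * v (i - n + m)) \<le> cmod (v (i - n + m))"
      by (simp add: norm_mult mult_left_le_one_le)
    then show ?thesis using True by (simp add: tm_def f_def power_mono)
  qed (simp add: tm_def)
  have st: "summable (\<lambda>i. (cmod (tm n m l v i))\<^sup>2)"
    by (rule summable_comparison_test'[OF S(1)]) (use le in auto)
  then show "tm n m l v \<in> l2" by (simp add: l2_iff)
  have "(\<Sum>i. (cmod (tm n m l v i))\<^sup>2) \<le> (\<Sum>i. if n \<le> i then f (i - n + m) else 0)"
    by (rule suminf_le[OF le st S(1)])
  also have "\<dots> \<le> suminf f" by (rule S(2))
  finally show "(\<Sum>i. (cmod (tm n m l v i))\<^sup>2) \<le> (\<Sum>k. (cmod (v k))\<^sup>2)" by (simp add: f_def)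
qed

type_synonym tl = "complex \<times> nat \<times> nat \<times> complex"

fun tapp :: "tl \<Rightarrow> vec \<Rightarrow> nat \<Rightarrow> complex" where
  "tapp (c, n, m, l) v i = c * tm n m l v i"

fun tco :: "tl \<Rightarrow> complex" where "tco (c, n, m, l) = c"
fun tla :: "tl \<Rightarrow> complex" where "tla (c, n, m, l) = l"

definition Wl :: "tl list \<Rightarrow> op" where
  "Wl cs v = (if v \<in> l2 then (\<lambda>i. \<Sum>t\<leftarrow>cs. tapp t v i) else zerovec)"

definition unitl :: "tl list \<Rightarrow> bool" where
  "unitl cs \<longleftrightarrow> (\<forall>t\<in>set cs. cmod (tla t) = 1)"

lemma tapp_l2:
  assumes "v \<in> l2" "cmod (tla t) = 1"
  shows "summable (\<lambda>i. (cmod (tapp t v i))\<^sup>2)"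
    and "(\<Sum>i. (cmod (tapp t v i))\<^sup>2) \<le> (cmod (tco t))^2 * (\<Sum>k. (cmod (v k))\<^sup>2)"
proof -
  obtain c n m l where t: "t = (c, n, m, l)" by (cases t)
  have l: "cmod l \<le> 1" using assms t by simp
  note T = tm_l2[OF assms(1) l, of n m]
  have eq: "(\<lambda>i. (cmod (tapp t v i))\<^sup>2) = (\<lambda>i. (cmod c)^2 * (cmod (tm n m l v i))\<^sup>2)"
    by (simp add: t norm_mult power_mult_distrib)
  have s: "summable (\<lambda>i. (cmod (tm n m l v i))\<^sup>2)" using T(1) by (simp add: l2_iff)
  show "summable (\<lambda>i. (cmod (tapp t v i))\<^sup>2)" unfolding eq using s by (rule summable_mult)
  show "(\<Sum>i. (cmod (tapp t v i))\<^sup>2) \<le> (cmod (tco t))^2 * (\<Sum>k. (cmod (v k))\<^sup>2)"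
    unfolding eq using suminf_mult[OF s, of "(cmod c)^2"] T(2) t
    by (simp add: mult_left_mono)
qed

definition Kc :: "tl list \<Rightarrow> real" where
  "Kc cs = real (length cs) * (\<Sum>t\<leftarrow>cs. (cmod (tco t))^2)"

lemma Kc_nonneg: "Kc cs \<ge> 0"
proof -
  have "(\<Sum>t\<leftarrow>cs. (cmod (tco t))^2) \<ge> 0" by (induction cs) auto
  then show ?thesis unfolding Kc_def by simp
qed

lemma Wl_l2:
  assumes u: "unitl cs" and v: "v \<in> l2"
  shows "Wl cs v \<in> l2" and "(\<Sum>i. (cmod (Wl cs v i))\<^sup>2) \<le> Kc cs * (\<Sum>k. (cmod (v k))\<^sup>2)"
proof -
  have ut: "\<And>t. t \<in> set cs \<Longrightarrow> cmod (tla t) = 1" using u by (simp add: unitl_def)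
  define g where "g = (\<lambda>t i. real (length cs) * (cmod (tapp t v i))\<^sup>2)"
  have sg: "\<And>t. t \<in> set cs \<Longrightarrow> summable (g t)"
    unfolding g_def using tapp_l2(1)[OF v ut] by (intro summable_mult) auto
  note SL = sum_list_suminf[of cs g, OF sg]
  have le: "(cmod (Wl cs v i))\<^sup>2 \<le> (\<Sum>t\<leftarrow>cs. g t i)" for i
    using sq_sum_list_le[of "\<lambda>t. tapp t v i" cs] v
    by (simp add: Wl_def g_def sum_list_const_mult)
  have sw: "summable (\<lambda>i. (cmod (Wl cs v i))\<^sup>2)"
    by (rule summable_comparison_test'[OF conjunct1[OF SL]]) (use le in auto)
  then show "Wl cs v \<in> l2" by (simp add: l2_iff)
  have "(\<Sum>i. (cmod (Wl cs v i))\<^sup>2) \<le> (\<Sum>i. \<Sum>t\<leftarrow>cs. g t i)"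
    by (rule suminf_le[OF le sw conjunct1[OF SL]])
  also have "\<dots> = (\<Sum>t\<leftarrow>cs. \<Sum>i. g t i)" using SL by simp
  also have "\<dots> \<le> (\<Sum>t\<leftarrow>cs. real (length cs) * ((cmod (tco t))^2 * (\<Sum>k. (cmod (v k))\<^sup>2)))"
  proof (rule sum_list_mono)
    fix t assume t: "t \<in> set cs"
    have "(\<Sum>i. g t i) = real (length cs) * (\<Sum>i. (cmod (tapp t v i))\<^sup>2)"
      unfolding g_def using suminf_mult[OF tapp_l2(1)[OF v ut[OF t]]] by simp
    then show "(\<Sum>i. g t i) \<le> real (length cs) * ((cmod (tco t))^2 * (\<Sum>k. (cmod (v k))\<^sup>2))"
      using tapp_l2(2)[OF v ut[OF t]] by (simp add: mult_left_mono)
  qed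
  also have "\<dots> = Kc cs * (\<Sum>k. (cmod (v k))\<^sup>2)"
    unfolding Kc_def by (simp add: sum_list_const_mult sum_list_mult_const mult.assoc)
  finally show "(\<Sum>i. (cmod (Wl cs v i))\<^sup>2) \<le> Kc cs * (\<Sum>k. (cmod (v k))\<^sup>2)" .
qed

lemma tm_lin: "tm n m l (\<lambda>k. u k + c * v k) i = tm n m l u i + c * tm n m l v i"
  by (simp add: tm_def algebra_simps)

lemma tapp_lin: "tapp t (\<lambda>k. u k + c * v k) i = tapp t u i + c * tapp t v i"
  by (cases t) (simp add: tm_lin algebra_simps)

lemma sum_list_lin: "(\<Sum>t\<leftarrow>cs. f t + c * g t) = (\<Sum>t\<leftarrow>cs. f t) + c * (\<Sum>t\<leftarrow>cs. (g t :: complex))"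
  by (induction cs) (auto simp: algebra_simps)

lemma Wl_bounded: assumes "unitl cs" shows "bounded_op (Wl cs)"
  unfolding bounded_op_def
proof (intro conjI ballI allI impI)
  fix u assume "u \<in> l2" then show "Wl cs u \<in> l2" using Wl_l2[OF assms] by blast
next
  fix u v c assume uv: "u \<in> l2" "v \<in> l2"
  have "(\<lambda>k. u k + c * v k) \<in> l2" using l2_lin[OF uv] by blast
  then show "Wl cs (\<lambda>k. u k + c * v k) = (\<lambda>k. Wl cs u k + c * Wl cs v k)"
    using uv by (simp add: Wl_def tapp_lin sum_list_lin)
next
  show "\<exists>C. \<forall>u\<in>l2. l2norm (Wl cs u) \<le> C * l2norm u"
  proof (intro exI ballI)
    fix u assume u: "u \<in> l2"
    have "l2norm (Wl cs u) = sqrt (\<Sum>i. (cmod (Wl cs u i))\<^sup>2)" by (simp add: l2norm_def)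
    also have "\<dots> \<le> sqrt (Kc cs * (\<Sum>k. (cmod (u k))\<^sup>2))"
      using Wl_l2(2)[OF assms u] by simp
    also have "\<dots> = sqrt (Kc cs) * l2norm u" by (simp add: l2norm_def real_sqrt_mult)
    finally show "l2norm (Wl cs u) \<le> sqrt (Kc cs) * l2norm u" .
  qed
next
  fix u assume "u \<notin> l2" then show "Wl cs u = zerovec" by (simp add: Wl_def)
qed



lemma Wl_append: "Wl (xs @ ys) = op_add (Wl xs) (Wl ys)"
  by (rule ext) (simp add: Wl_def op_add_def zerovec_def)

fun tscale :: "complex \<Rightarrow> tl \<Rightarrow> tl" where "tscale a (c, n, m, l) = (a * c, n, m, l)"

lemma tapp_tscale: "tapp (tscale a t) v i = a * tapp t v i"
  by (cases t) simp

lemma tla_tscale: "tla (tscale a t) = tla t" by (cases t) simp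

lemma Wl_scale: "Wl (map (tscale a) xs) = op_scale a (Wl xs)"
  by (rule ext) (simp add: Wl_def op_scale_def zerovec_def tapp_tscale sum_list_const_mult o_def)

lemma unitl_append: "unitl (xs @ ys) \<longleftrightarrow> unitl xs \<and> unitl ys" by (auto simp: unitl_def)
lemma unitl_scale: "unitl (map (tscale a) xs) = unitl xs" by (auto simp: unitl_def tla_tscale)

fun tprod :: "tl \<Rightarrow> tl \<Rightarrow> tl" where
  "tprod (c, n, m, l) (d, p, q, \<mu>) = (if m \<le> p then (c * d * l ^ (p - m), n + p - m, q, l * \<mu>)
     else (c * d * \<mu> ^ (m - p), n, q + m - p, l * \<mu>))"

definition prodl :: "tl list \<Rightarrow> tl list \<Rightarrow> tl list" where
  "prodl xs ys = concat (map (\<lambda>x. map (tprod x) ys) xs)"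

lemma tm_comp:
  "tm n m l (tm p q \<mu> v) i = (if m \<le> p then l ^ (p - m) * tm (n + p - m) q (l * \<mu>) v i
      else \<mu> ^ (m - p) * tm n (q + m - p) (l * \<mu>) v i)"
proof (cases "m \<le> p")
  case True
  then obtain k where p: "p = m + k" by (metis le_add_diff_inverse)
  show ?thesis
  proof (cases "n + k \<le> i")
    case False then show ?thesis using True p by (auto simp: tm_def)
  next
    case c: True
    then obtain r where i: "i = n + k + r" by (metis le_add_diff_inverse)
    show ?thesis by (simp add: tm_def p i power_add power_mult_distrib mult_ac)
  qed
next
  case False
  then obtain k where m: "m = p + Suc k" by (metis add_Suc_right less_imp_Suc_add not_le)
  show ?thesis
  proof (cases "n \<le> i")
    case False then show ?thesis by (auto simp: tm_def)
  next
    case c: True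
    then obtain r where i: "i = n + r" by (metis le_add_diff_inverse)
    have e: "r + (p + Suc k) - p = r + Suc k" by simp
    show ?thesis by (simp add: tm_def m i e power_add power_mult_distrib mult_ac add_ac)
  qed
qed

lemma sum_list_concat': "(\<Sum>x\<leftarrow>concat xss. f x) = (\<Sum>xs\<leftarrow>xss. \<Sum>x\<leftarrow>xs. (f x :: 'a::comm_monoid_add))"
  by (induction xss) auto

lemma tm_sum: "tm n m l (\<lambda>k. \<Sum>y\<leftarrow>ys. f y k) i = (\<Sum>y\<leftarrow>ys. tm n m l (f y) i)"
  by (simp add: tm_def sum_list_const_mult)

lemma tapp_sum: "tapp x (\<lambda>k. \<Sum>y\<leftarrow>ys. tapp y v k) i = (\<Sum>y\<leftarrow>ys. tapp (tprod x y) v i)"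
proof -
  obtain c n m l where x: "x = (c, n, m, l)" by (cases x)
  have "tapp x (\<lambda>k. \<Sum>y\<leftarrow>ys. tapp y v k) i = c * (\<Sum>y\<leftarrow>ys. tm n m l (tapp y v) i)"
    using tm_sum[of n m l "\<lambda>y k. tapp y v k" ys i] by (simp add: x)
  also have "\<dots> = (\<Sum>y\<leftarrow>ys. c * tm n m l (tapp y v) i)" by (simp add: sum_list_const_mult)
  also have "\<dots> = (\<Sum>y\<leftarrow>ys. tapp (tprod x y) v i)"
  proof (rule arg_cong[where f = sum_list], rule map_cong[OF refl])
    fix y assume "y \<in> set ys"
    obtain d p q \<mu> where y: "y = (d, p, q, \<mu>)" by (cases y)
    have "tapp y v = (\<lambda>k. d * tm p q \<mu> v k)" by (simp add: y fun_eq_iff)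
    then have "tm n m l (tapp y v) i = d * tm n m l (tm p q \<mu> v) i"
      by (simp add: tm_def)
    then show "c * tm n m l (tapp y v) i = tapp (tprod x y) v i"
      by (simp add: x y tm_comp)
  qed
  finally show ?thesis .
qed

lemma tm_zero: "tm n m l zerovec = zerovec" by (simp add: tm_def zerovec_def fun_eq_iff)

lemma Wl_zero: "Wl cs zerovec = zerovec"
proof -
  have "tapp t zerovec i = 0" for t i by (cases t) (simp add: tm_zero, simp add: zerovec_def)
  then show ?thesis by (simp add: Wl_def fun_eq_iff zerovec_def)
qed

lemma Wl_mult: assumes "unitl ys" shows "Wl (prodl xs ys) = op_mult (Wl xs) (Wl ys)"
proof (rule ext)
  fix v show "Wl (prodl xs ys) v = op_mult (Wl xs) (Wl ys) v"
  proof (cases "v \<in> l2")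
    case True
    have w: "Wl ys v \<in> l2" using Wl_l2[OF assms True] by blast
    have "Wl ys v = (\<lambda>k. \<Sum>y\<leftarrow>ys. tapp y v k)" using True by (simp add: Wl_def)
    then have "Wl xs (Wl ys v) = (\<lambda>i. \<Sum>x\<leftarrow>xs. \<Sum>y\<leftarrow>ys. tapp (tprod x y) v i)"
      using w by (simp add: Wl_def tapp_sum)
    also have "\<dots> = Wl (prodl xs ys) v"
      using True by (simp add: Wl_def prodl_def sum_list_concat' o_def fun_eq_iff)
    finally show ?thesis by (simp add: op_mult_def)
  next
    case False
    have h1: "Wl ys v = zerovec" "Wl (prodl xs ys) v = zerovec" using False by (simp_all add: Wl_def)
    then show ?thesis by (simp add: op_mult_def Wl_zero)
  qed
qed

lemma tla_tprod: "tla (tprod x y) = tla x * tla y"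
  by (cases x; cases y) simp

lemma unitl_prodl: "unitl xs \<Longrightarrow> unitl ys \<Longrightarrow> unitl (prodl xs ys)"
  by (auto simp: unitl_def prodl_def tla_tprod norm_mult)



lemma l2_prod_summable:
  assumes "u \<in> l2" "v \<in> l2"
  shows "summable (\<lambda>k. cnj (u k) * v k)"
proof -
  have s: "summable (\<lambda>k. ((cmod (u k))\<^sup>2 + (cmod (v k))\<^sup>2) / 2)"
    using assms by (intro summable_divide summable_add) (auto simp: l2_iff)
  have "norm (cnj (u k) * v k) \<le> ((cmod (u k))\<^sup>2 + (cmod (v k))\<^sup>2) / 2" for k
  proof -
    have "0 \<le> (cmod (u k) - cmod (v k))^2" by simp
    then show ?thesis by (simp add: norm_mult power2_diff)
  qed
  then show ?thesis by (intro summable_comparison_test'[OF s]) auto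
qed

lemma tm_adj:
  assumes u: "u \<in> l2" and v: "v \<in> l2" and l: "cmod l = 1"
  shows "(\<Sum>i. cnj (tm m n (cnj l) u i) * v i) = (\<Sum>k. cnj (u k) * tm n m l v k)"
proof -
  have l1: "cmod (cnj l) \<le> 1" "cmod l \<le> 1" using l by auto
  define F where "F = (\<lambda>i. cnj (tm m n (cnj l) u i) * v i)"
  define G where "G = (\<lambda>k. cnj (u k) * tm n m l v k)"
  have sF: "summable F" unfolding F_def by (rule l2_prod_summable[OF tm_l2(1)[OF u l1(1)] v])
  have sG: "summable G" unfolding G_def by (rule l2_prod_summable[OF u tm_l2(1)[OF v l1(2)]])
  have "suminf F = (\<Sum>j. F (j + m)) + (\<Sum>i<m. F i)" by (rule suminf_split_initial_segment[OF sF])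
  also have "(\<Sum>i<m. F i) = 0" by (simp add: F_def tm_def)
  finally have eF: "suminf F = (\<Sum>j. l ^ j * cnj (u (j + n)) * v (j + m))"
    by (simp add: F_def tm_def mult_ac)
  have "suminf G = (\<Sum>j. G (j + n)) + (\<Sum>i<n. G i)" by (rule suminf_split_initial_segment[OF sG])
  also have "(\<Sum>i<n. G i) = 0" by (simp add: G_def tm_def)
  finally have eG: "suminf G = (\<Sum>j. l ^ j * cnj (u (j + n)) * v (j + m))"
    by (simp add: G_def tm_def mult_ac)
  show ?thesis using eF eG by (simp add: F_def G_def)
qed

fun tadj :: "tl \<Rightarrow> tl" where "tadj (c, n, m, l) = (cnj c, m, n, cnj l)"

lemma tla_tadj: "tla (tadj t) = cnj (tla t)" by (cases t) simp

lemma unitl_adj: "unitl (map tadj xs) = unitl xs" by (auto simp: unitl_def tla_tadj)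

lemma tapp_l2vec:
  assumes "u \<in> l2" "cmod (tla t) = 1" shows "tapp t u \<in> l2"
  using tapp_l2(1)[OF assms] by (simp add: l2_iff)

lemma tapp_adj:
  assumes u: "u \<in> l2" and v: "v \<in> l2" and l: "cmod (tla t) = 1"
  shows "(\<Sum>i. cnj (tapp (tadj t) u i) * v i) = (\<Sum>k. cnj (u k) * tapp t v k)"
proof -
  obtain c n m l where t: "t = (c, n, m, l)" by (cases t)
  have l': "cmod l = 1" using l t by simp
  have s1: "summable (\<lambda>i. cnj (tm m n (cnj l) u i) * v i)"
    using l' by (intro l2_prod_summable[OF tm_l2(1)[OF u] v]) auto
  have s2: "summable (\<lambda>k. cnj (u k) * tm n m l v k)"
    using l' by (intro l2_prod_summable[OF u tm_l2(1)[OF v]]) auto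
  have "(\<Sum>i. cnj (tapp (tadj t) u i) * v i) = (\<Sum>i. c * (cnj (tm m n (cnj l) u i) * v i))"
    by (simp add: t mult_ac)
  also have "\<dots> = c * (\<Sum>i. cnj (tm m n (cnj l) u i) * v i)" using suminf_mult[OF s1] by simp
  also have "\<dots> = c * (\<Sum>k. cnj (u k) * tm n m l v k)" using tm_adj[OF u v l'] by simp
  also have "\<dots> = (\<Sum>k. c * (cnj (u k) * tm n m l v k))" using suminf_mult[OF s2] by simp
  also have "\<dots> = (\<Sum>k. cnj (u k) * tapp t v k)" by (simp add: t mult_ac)
  finally show ?thesis .
qed

lemma cnj_sum_list: "cnj (\<Sum>t\<leftarrow>xs. f t) = (\<Sum>t\<leftarrow>xs. cnj (f t))"
  by (induction xs) auto

lemma Wl_inner: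
  assumes uc: "unitl xs" and u: "u \<in> l2" and v: "v \<in> l2"
  shows "l2inner (Wl (map tadj xs) u) v = l2inner u (Wl xs v)"
proof -
  have ut: "\<And>t. t \<in> set xs \<Longrightarrow> cmod (tla t) = 1" using uc by (simp add: unitl_def)
  have utt: "\<And>t. t \<in> set xs \<Longrightarrow> cmod (tla (tadj t)) = 1" using ut by (simp add: tla_tadj)
  have sa: "\<And>t. t \<in> set xs \<Longrightarrow> summable (\<lambda>i. cnj (tapp (tadj t) u i) * v i)"
    by (rule l2_prod_summable[OF tapp_l2vec[OF u utt] v])
  have sb: "\<And>t. t \<in> set xs \<Longrightarrow> summable (\<lambda>k. cnj (u k) * tapp t v k)"
    by (rule l2_prod_summable[OF u tapp_l2vec[OF v ut]])
  have "l2inner (Wl (map tadj xs) u) v = (\<Sum>i. \<Sum>t\<leftarrow>xs. cnj (tapp (tadj t) u i) * v i)"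
    using u by (simp add: l2inner_def Wl_def cnj_sum_list sum_list_mult_const o_def)
  also have "\<dots> = (\<Sum>t\<leftarrow>xs. \<Sum>i. cnj (tapp (tadj t) u i) * v i)"
    using sum_list_suminf[of xs "\<lambda>t i. cnj (tapp (tadj t) u i) * v i", OF sa] by simp
  also have "\<dots> = (\<Sum>t\<leftarrow>xs. \<Sum>k. cnj (u k) * tapp t v k)"
    by (rule arg_cong[where f = sum_list], rule map_cong[OF refl]) (rule tapp_adj[OF u v ut])
  also have "\<dots> = (\<Sum>k. \<Sum>t\<leftarrow>xs. cnj (u k) * tapp t v k)"
    using sum_list_suminf[of xs "\<lambda>t k. cnj (u k) * tapp t v k", OF sb] by simp
  also have "\<dots> = l2inner u (Wl xs v)"
    using v by (simp add: l2inner_def Wl_def sum_list_const_mult)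
  finally show ?thesis .
qed

lemma l2inner_E: "l2inner w (E k) = cnj (w k)"
proof -
  have "l2inner w (E k) = (\<Sum>j. if j = k then cnj (w j) else 0)"
    by (simp add: l2inner_def E_def if_distrib cong: if_cong)
  also have "\<dots> = cnj (w k)" using sums_single[of k "\<lambda>j. cnj (w j)"] by (simp add: sums_iff)
  finally show ?thesis .
qed

lemma adj_unique:
  assumes "bounded_op S" "bounded_op S'"
    and "\<forall>u\<in>l2. \<forall>v\<in>l2. l2inner (S u) v = l2inner (S' u) v"
  shows "S = S'"
proof (rule ext)
  fix u show "S u = S' u"
  proof (cases "u \<in> l2")
    case True
    show ?thesis
    proof (rule ext)
      fix k
      have "l2inner (S u) (E k) = l2inner (S' u) (E k)" using assms(3) True E_l2 by blast
      then show "S u k = S' u k" by (simp add: l2inner_E)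
    qed
  next
    case False then show ?thesis using assms(1,2) by (simp add: bounded_op_def)
  qed
qed

lemma Wl_adjoint:
  assumes uc: "unitl xs"
  shows "adjoint (Wl xs) = Wl (map tadj xs)"
  unfolding adjoint_def
proof (rule the_equality)
  show "bounded_op (Wl (map tadj xs)) \<and> (\<forall>u\<in>l2. \<forall>v\<in>l2. l2inner (Wl (map tadj xs) u) v = l2inner u (Wl xs v))"
    using Wl_bounded uc unitl_adj Wl_inner by blast
next
  fix S assume S: "bounded_op S \<and> (\<forall>u\<in>l2. \<forall>v\<in>l2. l2inner (S u) v = l2inner u (Wl xs v))"
  show "S = Wl (map tadj xs)"
    by (rule adj_unique) (use S Wl_bounded uc unitl_adj Wl_inner in auto)
qed



lemma shift_Wl: "shift = Wl [(1, 1, 0, 1)]"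
  by (rule ext) (auto simp: shift_def Wl_def tm_def fun_eq_iff)

lemma adjshift_Wl: "adjoint shift = Wl [(1, 0, 1, 1)]"
  using Wl_adjoint[of "[(1, 1, 0, 1)]"] by (simp add: shift_Wl unitl_def)

lemma natmul_Suc: "natmul (Suc k) x = x + natmul k x"
  by (simp add: natmul_def)

lemma char_natmul:
  assumes "character chi" shows "chi (natmul k x) = (chi x) ^ k"
proof (induction k)
  case 0
  have "chi 0 = chi 0 * chi 0" using assms unfolding character_def by (metis add_0)
  moreover have "chi 0 \<noteq> 0" using assms unfolding character_def by (metis norm_zero zero_neq_one)
  ultimately show ?case by (simp add: natmul_def)
next
  case (Suc k)
  then show ?case using assms unfolding character_def by (simp add: natmul_Suc)
qed

lemma mult_char_Wl:
  assumes "character chi"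
  shows "mult_op chi (\<lambda>n. natmul n x1) = Wl [(1, 0, 0, chi x1)]"
  by (rule ext) (auto simp: mult_op_def Wl_def tm_def fun_eq_iff char_natmul[OF assms])

lemma rep:
  assumes "T \<in> alg_calA x1"
  shows "\<exists>cs. unitl cs \<and> T = Wl cs"
  using assms unfolding alg_calA_def
proof (induction rule: star_alg_gen.induct)
  case (gen T)
  then show ?case
  proof (elim UnE)
    assume "T \<in> {shift, adjoint shift}"
    then have "T = Wl [(1,1,0,1)] \<or> T = Wl [(1,0,1,1)]" using shift_Wl adjshift_Wl by auto
    then show ?thesis
    proof
      assume "T = Wl [(1,1,0,1)]" then show ?thesis by (intro exI[of _ "[(1,1,0,1)]"]) (simp add: unitl_def)
    next
      assume "T = Wl [(1,0,1,1)]" then show ?thesis by (intro exI[of _ "[(1,0,1,1)]"]) (simp add: unitl_def)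
    qed
  next
    assume "T \<in> {mult_op chi (\<lambda>n. natmul n x1) |chi. character chi}"
    then obtain chi where c: "character chi" and T: "T = mult_op chi (\<lambda>n. natmul n x1)" by blast
    have "cmod (chi x1) = 1" using c by (simp add: character_def)
    then show ?thesis using mult_char_Wl[OF c] T by (intro exI[of _ "[(1, 0, 0, chi x1)]"]) (simp add: unitl_def)
  qed
next
  case (add T T')
  then obtain xs ys where "unitl xs" "T = Wl xs" "unitl ys" "T' = Wl ys" by blast
  then show ?case using Wl_append unitl_append by metis
next
  case (scale T c)
  then obtain xs where "unitl xs" "T = Wl xs" by blast
  then show ?case using Wl_scale unitl_scale by metis
next
  case (mult T T')
  then obtain xs ys where "unitl xs" "T = Wl xs" "unitl ys" "T' = Wl ys" by blast
  then show ?case using Wl_mult unitl_prodl by metis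
next
  case (adj T)
  then obtain xs where "unitl xs" "T = Wl xs" by blast
  then show ?case using Wl_adjoint unitl_adj by metis
qed

lemma gen_in: "T \<in> {shift, adjoint shift} \<union>
      {mult_op chi (\<lambda>n. natmul n x1) | chi :: 'g \<Rightarrow> complex. character chi} \<Longrightarrow> T \<in> alg_calA (x1::'g::topological_ab_group_add)"
  unfolding alg_calA_def by (rule star_alg_gen.gen)

fun sp :: "nat \<Rightarrow> op" where
  "sp 0 = op_mult (adjoint shift) shift"
| "sp (Suc k) = op_mult shift (sp k)"

fun sa :: "nat \<Rightarrow> op" where
  "sa 0 = op_mult (adjoint shift) shift"
| "sa (Suc k) = op_mult (adjoint shift) (sa k)"

lemma sh_in: "shift \<in> alg_calA x1" "adjoint shift \<in> alg_calA x1"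
  by (auto intro: gen_in)

lemma sp_in: "sp k \<in> alg_calA x1"
  using sh_in[of x1, unfolded alg_calA_def] unfolding alg_calA_def by (induction k) (auto intro: star_alg_gen.mult)

lemma sa_in: "sa k \<in> alg_calA x1"
  using sh_in[of x1, unfolded alg_calA_def] unfolding alg_calA_def by (induction k) (auto intro: star_alg_gen.mult)

lemma I_Wl: "op_mult (adjoint shift) shift = Wl [(1, 0, 0, 1)]"
  unfolding adjshift_Wl using Wl_mult[of "[(1, 1, 0, 1)]" "[(1, 0, 1, 1)]"]
  by (simp add: shift_Wl unitl_def prodl_def)

lemma sp_Wl: "sp k = Wl [(1, k, 0, 1)]"
proof (induction k)
  case 0 then show ?case by (simp add: I_Wl)
next
  case (Suc k)
  then show ?case using Wl_mult[of "[(1, k, 0, 1)]" "[(1, 1, 0, 1)]"]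
    by (simp add: shift_Wl unitl_def prodl_def)
qed

lemma sa_Wl: "sa k = Wl [(1, 0, k, 1)]"
proof (induction k)
  case 0 then show ?case by (simp add: I_Wl)
next
  case (Suc k)
  then show ?case using Wl_mult[of "[(1, 0, k, 1)]" "[(1, 0, 1, 1)]"]
    by (simp add: adjshift_Wl unitl_def prodl_def)
qed

definition Pm :: "nat \<Rightarrow> op" where
  "Pm M = op_add (sp 0) (op_scale (-1) (op_mult (sp M) (sa M)))"

lemma Pm_in: "Pm M \<in> alg_calA x1"
  unfolding Pm_def using sp_in[of 0 x1] sp_in[of M x1] sa_in[of M x1]
  by (auto simp: alg_calA_def intro: star_alg_gen.add star_alg_gen.scale star_alg_gen.mult)

lemma Pm_Wl: "Pm M = Wl [(1, 0, 0, 1), (-1, M, M, 1)]"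
proof -
  have "op_mult (sp M) (sa M) = Wl [(1, M, M, 1)]"
    using Wl_mult[of "[(1, 0, M, 1)]" "[(1, M, 0, 1)]"]
    by (simp add: sp_Wl sa_Wl unitl_def prodl_def)
  then have "op_scale (-1) (op_mult (sp M) (sa M)) = Wl [(-1, M, M, 1)]"
    using Wl_scale[of "-1" "[(1, M, M, 1)]"] by simp
  then show ?thesis unfolding Pm_def using Wl_append[of "[(1, 0, 0, 1)]" "[(-1, M, M, 1)]"]
    by (simp add: sp_Wl)
qed

lemma Pm_apply: "w \<in> l2 \<Longrightarrow> Pm M w = (\<lambda>i. if i < M then w i else 0)"
  by (auto simp: Pm_Wl Wl_def tm_def fun_eq_iff)

lemma Pm_bounded: "bounded_op (Pm M)"
  unfolding Pm_Wl by (rule Wl_bounded) (simp add: unitl_def)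



lemma bo_l2: "bounded_op S \<Longrightarrow> u \<in> l2 \<Longrightarrow> S u \<in> l2"
  by (simp add: bounded_op_def)

lemma bo_lin: "bounded_op S \<Longrightarrow> u \<in> l2 \<Longrightarrow> v \<in> l2 \<Longrightarrow> S (\<lambda>k. u k + c * v k) = (\<lambda>k. S u k + c * S v k)"
  by (simp add: bounded_op_def)

lemma bo_out: "bounded_op S \<Longrightarrow> u \<notin> l2 \<Longrightarrow> S u = zerovec"
  by (simp add: bounded_op_def)

lemma bo_zero: assumes "bounded_op S" shows "S zerovec = zerovec"
proof -
  have "S (\<lambda>k. zerovec k + (-1) * zerovec k) = (\<lambda>k. S zerovec k + (-1) * S zerovec k)"
    by (rule bo_lin[OF assms]) auto
  moreover have "(\<lambda>k. zerovec k + (-1) * zerovec k) = zerovec" by (simp add: zerovec_def)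
  ultimately show ?thesis by (simp add: zerovec_def fun_eq_iff)
qed

lemma bo_l2_all: "bounded_op S \<Longrightarrow> S u \<in> l2"
  by (cases "u \<in> l2") (auto simp: bo_l2 bo_out)

lemma bo_C: assumes "bounded_op S" shows "\<exists>C\<ge>0. \<forall>u\<in>l2. l2norm (S u) \<le> C * l2norm u"
proof -
  obtain C where C: "\<forall>u\<in>l2. l2norm (S u) \<le> C * l2norm u" using assms by (auto simp: bounded_op_def)
  show ?thesis
  proof (intro exI[of _ "max C 0"] conjI ballI)
    fix u assume u: "u \<in> l2"
    have "C * l2norm u \<le> max C 0 * l2norm u" using l2norm_nonneg[OF u] by (simp add: mult_right_mono)
    then show "l2norm (S u) \<le> max C 0 * l2norm u" using C u by force
  qed simp
qed

lemma bo_diff: assumes "bounded_op S" "u \<in> l2" "w \<in> l2"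
  shows "(\<lambda>k. S u k - S w k) = S (\<lambda>k. u k - w k)" and "(\<lambda>k. u k - w k) \<in> l2"
proof -
  have "S (\<lambda>k. u k + (-1) * w k) = (\<lambda>k. S u k + (-1) * S w k)" by (rule bo_lin[OF assms])
  then show "(\<lambda>k. S u k - S w k) = S (\<lambda>k. u k - w k)" by simp
  show "(\<lambda>k. u k - w k) \<in> l2" using l2_lin(1)[OF assms(2,3), where c="-1"] by simp
qed

lemma bo_mult: assumes S: "bounded_op S" and T: "bounded_op T" shows "bounded_op (op_mult S T)"
  unfolding bounded_op_def op_mult_def o_def
proof (intro conjI ballI allI impI)
  fix u assume "u \<in> l2" then show "S (T u) \<in> l2" using S T by (simp add: bo_l2)
next
  fix u v c assume uv: "u \<in> l2" "v \<in> l2"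
  show "S (T (\<lambda>k. u k + c * v k)) = (\<lambda>k. S (T u) k + c * S (T v) k)"
    using bo_lin[OF T uv] bo_lin[OF S bo_l2[OF T uv(1)] bo_l2[OF T uv(2)]] by simp
next
  obtain C1 where C1: "C1 \<ge> 0" "\<forall>u\<in>l2. l2norm (S u) \<le> C1 * l2norm u" using bo_C[OF S] by blast
  obtain C2 where C2: "C2 \<ge> 0" "\<forall>u\<in>l2. l2norm (T u) \<le> C2 * l2norm u" using bo_C[OF T] by blast
  show "\<exists>C. \<forall>u\<in>l2. l2norm (S (T u)) \<le> C * l2norm u"
  proof (intro exI ballI)
    fix u assume u: "u \<in> l2"
    have "l2norm (S (T u)) \<le> C1 * l2norm (T u)" using C1 bo_l2[OF T u] by blast
    also have "\<dots> \<le> C1 * (C2 * l2norm u)" using C2 u C1(1) by (simp add: mult_left_mono)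
    finally show "l2norm (S (T u)) \<le> (C1 * C2) * l2norm u" by simp
  qed
next
  fix u assume "u \<notin> l2" then show "S (T u) = zerovec" using S T by (simp add: bo_out bo_zero)
qed

lemma bo_add: assumes S: "bounded_op S" and T: "bounded_op T" shows "bounded_op (op_add S T)"
  unfolding bounded_op_def op_add_def
proof (intro conjI ballI allI impI)
  fix u assume u: "u \<in> l2" then show "(\<lambda>k. S u k + T u k) \<in> l2"
    using l2_lin(1)[OF bo_l2[OF S u] bo_l2[OF T u], where c=1] by simp
next
  fix u v c assume uv: "u \<in> l2" "v \<in> l2"
  show "(\<lambda>k. S (\<lambda>k. u k + c * v k) k + T (\<lambda>k. u k + c * v k) k) = (\<lambda>k. S u k + T u k + c * (S v k + T v k))"
    using bo_lin[OF T uv] bo_lin[OF S uv] by (simp add: algebra_simps)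
next
  obtain C1 where C1: "C1 \<ge> 0" "\<forall>u\<in>l2. l2norm (S u) \<le> C1 * l2norm u" using bo_C[OF S] by blast
  obtain C2 where C2: "C2 \<ge> 0" "\<forall>u\<in>l2. l2norm (T u) \<le> C2 * l2norm u" using bo_C[OF T] by blast
  show "\<exists>C. \<forall>u\<in>l2. l2norm (\<lambda>k. S u k + T u k) \<le> C * l2norm u"
  proof (intro exI ballI)
    fix u assume u: "u \<in> l2"
    have "l2norm (\<lambda>k. S u k + 1 * T u k) \<le> 2 * (l2norm (S u) + cmod 1 * l2norm (T u))"
      by (rule l2norm_lin_le[OF bo_l2[OF S u] bo_l2[OF T u]])
    also have "\<dots> \<le> 2 * (C1 * l2norm u + C2 * l2norm u)" using C1 C2 u by (simp add: add_mono)
    finally show "l2norm (\<lambda>k. S u k + T u k) \<le> (2 * (C1 + C2)) * l2norm u" by (simp add: algebra_simps)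
  qed
next
  fix u assume "u \<notin> l2" then show "(\<lambda>k. S u k + T u k) = zerovec" using S T by (simp add: bo_out zerovec_def)
qed

lemma compact_bo: "compact_op T \<Longrightarrow> bounded_op T" by (simp add: compact_op_def)

lemma l2norm_tendsto_diff:
  assumes "\<And>n. a n \<in> l2" "w \<in> l2" "(\<lambda>n. l2norm (\<lambda>k. a n k - w k)) \<longlonglongrightarrow> 0"
      "\<And>n. b n \<in> l2" "z \<in> l2" "(\<lambda>n. l2norm (\<lambda>k. b n k - z k)) \<longlonglongrightarrow> 0"
  shows "(\<lambda>n. l2norm (\<lambda>k. (a n k + b n k) - (w k + z k))) \<longlonglongrightarrow> 0"
proof (rule Lim_null_comparison)
  have ad: "\<And>n. (\<lambda>k. a n k - w k) \<in> l2" "\<And>n. (\<lambda>k. b n k - z k) \<in> l2"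
    using l2_lin(1)[OF assms(1) assms(2), where c="-1"] l2_lin(1)[OF assms(4) assms(5), where c="-1"] by auto
  show "\<forall>\<^sub>F n in sequentially. norm (l2norm (\<lambda>k. (a n k + b n k) - (w k + z k)))
      \<le> 2 * (l2norm (\<lambda>k. a n k - w k) + l2norm (\<lambda>k. b n k - z k))"
  proof (intro always_eventually allI)
    fix n
    have e: "(\<lambda>k. (a n k + b n k) - (w k + z k)) = (\<lambda>k. (a n k - w k) + 1 * (b n k - z k))" by auto
    have l: "(\<lambda>k. (a n k - w k) + 1 * (b n k - z k)) \<in> l2" using l2_lin(1)[OF ad(1)[of n] ad(2)[of n], where c=1] by blast
    show "norm (l2norm (\<lambda>k. (a n k + b n k) - (w k + z k)))
      \<le> 2 * (l2norm (\<lambda>k. a n k - w k) + l2norm (\<lambda>k. b n k - z k))"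
      unfolding e using l2norm_lin_le[OF ad(1)[of n] ad(2)[of n], where c=1] l2norm_nonneg[OF l] by simp
  qed
  show "(\<lambda>n. 2 * (l2norm (\<lambda>k. a n k - w k) + l2norm (\<lambda>k. b n k - z k))) \<longlonglongrightarrow> 0"
    using tendsto_mult_right_zero[OF tendsto_add_zero[OF assms(3) assms(6)], of 2] by simp
qed

lemma compact_add:
  assumes A: "compact_op A" and B: "compact_op B"
  shows "compact_op (op_add A B)"
  unfolding compact_op_def
proof (intro conjI allI impI)
  show "bounded_op (op_add A B)" using A B by (simp add: bo_add compact_bo)
  fix u :: "nat \<Rightarrow> vec" assume u: "\<forall>n. u n \<in> l2 \<and> l2norm (u n) \<le> 1"
  obtain r1 w1 where r1: "strict_mono r1" "w1 \<in> l2" "(\<lambda>n. l2norm (\<lambda>k. A (u (r1 n)) k - w1 k)) \<longlonglongrightarrow> 0"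
    using A u unfolding compact_op_def by blast
  have u': "\<forall>n. (u \<circ> r1) n \<in> l2 \<and> l2norm ((u \<circ> r1) n) \<le> 1" using u by simp
  obtain r2 w2 where r2: "strict_mono r2" "w2 \<in> l2" "(\<lambda>n. l2norm (\<lambda>k. B ((u \<circ> r1) (r2 n)) k - w2 k)) \<longlonglongrightarrow> 0"
    using B u' unfolding compact_op_def by blast
  have c1: "(\<lambda>n. l2norm (\<lambda>k. A (u (r1 (r2 n))) k - w1 k)) \<longlonglongrightarrow> 0"
    using LIMSEQ_subseq_LIMSEQ[OF r1(3) r2(1)] by (simp add: o_def)
  have c: "(\<lambda>n. l2norm (\<lambda>k. (A (u (r1 (r2 n))) k + B (u (r1 (r2 n))) k) - (w1 k + w2 k))) \<longlonglongrightarrow> 0"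
    by (rule l2norm_tendsto_diff[OF _ r1(2) c1 _ r2(2)])
       (use r2(3) A B in \<open>auto simp: bo_l2_all compact_bo o_def\<close>)
  show "\<exists>r w. strict_mono r \<and> w \<in> l2 \<and> (\<lambda>n. l2norm (\<lambda>k. op_add A B (u (r n)) k - w k)) \<longlonglongrightarrow> 0"
  proof (intro exI conjI)
    show "strict_mono (r1 \<circ> r2)" using r1(1) r2(1) by (rule strict_mono_o)
    show "(\<lambda>k. w1 k + w2 k) \<in> l2" using l2_lin(1)[OF r1(2) r2(2), where c=1] by simp
    show "(\<lambda>n. l2norm (\<lambda>k. op_add A B (u ((r1 \<circ> r2) n)) k - (w1 k + w2 k))) \<longlonglongrightarrow> 0"
      using c by (simp add: op_add_def)
  qed
qed

lemma compact_mult_left: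
  assumes S: "bounded_op S" and T: "compact_op T"
  shows "compact_op (op_mult S T)"
  unfolding compact_op_def
proof (intro conjI allI impI)
  show "bounded_op (op_mult S T)" using S T by (simp add: bo_mult compact_bo)
  fix u :: "nat \<Rightarrow> vec" assume u: "\<forall>n. u n \<in> l2 \<and> l2norm (u n) \<le> 1"
  obtain r w where r: "strict_mono r" "w \<in> l2" "(\<lambda>n. l2norm (\<lambda>k. T (u (r n)) k - w k)) \<longlonglongrightarrow> 0"
    using T u unfolding compact_op_def by blast
  obtain C where C: "C \<ge> 0" "\<forall>u\<in>l2. l2norm (S u) \<le> C * l2norm u" using bo_C[OF S] by blast
  have Tl: "\<And>v. T v \<in> l2" using T by (simp add: bo_l2_all compact_bo)
  show "\<exists>r w. strict_mono r \<and> w \<in> l2 \<and> (\<lambda>n. l2norm (\<lambda>k. op_mult S T (u (r n)) k - w k)) \<longlonglongrightarrow> 0"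
  proof (intro exI conjI)
    show "strict_mono r" by fact
    show "S w \<in> l2" using S r(2) by (simp add: bo_l2)
    show "(\<lambda>n. l2norm (\<lambda>k. op_mult S T (u (r n)) k - S w k)) \<longlonglongrightarrow> 0"
    proof (rule Lim_null_comparison)
      show "\<forall>\<^sub>F n in sequentially. norm (l2norm (\<lambda>k. op_mult S T (u (r n)) k - S w k))
          \<le> C * l2norm (\<lambda>k. T (u (r n)) k - w k)"
      proof (intro always_eventually allI)
        fix n
        have e: "(\<lambda>k. op_mult S T (u (r n)) k - S w k) = S (\<lambda>k. T (u (r n)) k - w k)"
          using bo_diff(1)[OF S Tl r(2)] by (simp add: op_mult_def)
        have l: "(\<lambda>k. T (u (r n)) k - w k) \<in> l2" using bo_diff(2)[OF S Tl r(2)] by blast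
        show "norm (l2norm (\<lambda>k. op_mult S T (u (r n)) k - S w k)) \<le> C * l2norm (\<lambda>k. T (u (r n)) k - w k)"
          unfolding e using C l l2norm_nonneg[OF bo_l2[OF S l]] by simp
      qed
      show "(\<lambda>n. C * l2norm (\<lambda>k. T (u (r n)) k - w k)) \<longlonglongrightarrow> 0"
        using tendsto_mult_right_zero[OF r(3)] by simp
    qed
  qed
qed

lemma BW_coords:
  fixes f :: "nat \<Rightarrow> nat \<Rightarrow> complex"
  assumes B: "\<And>n k. cmod (f n k) \<le> B"
  shows "\<exists>r w. strict_mono r \<and> (\<forall>k<M. (\<lambda>n. f (r n) k) \<longlonglongrightarrow> w k)"
proof (induction M)
  case 0 show ?case using strict_mono_id by blast
next
  case (Suc M)
  then obtain r w where r: "strict_mono r" "\<forall>k<M. (\<lambda>n. f (r n) k) \<longlonglongrightarrow> w k" by blast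
  have "bounded (range (\<lambda>n. f (r n) M))" using B by (auto simp: bounded_iff)
  then obtain l s where s: "strict_mono s" "((\<lambda>n. f (r n) M) \<circ> s) \<longlonglongrightarrow> l"
    using bounded_imp_convergent_subsequence by blast
  show ?case
  proof (intro exI conjI allI impI)
    show "strict_mono (r \<circ> s)" using r(1) s(1) by (rule strict_mono_o)
    fix k assume k: "k < Suc M"
    show "(\<lambda>n. f ((r \<circ> s) n) k) \<longlonglongrightarrow> (w(M := l)) k"
    proof (cases "k = M")
      case True then show ?thesis using s(2) by (simp add: o_def)
    next
      case False
      then have "k < M" using k by simp
      then show ?thesis using LIMSEQ_subseq_LIMSEQ[OF r(2)[rule_format, OF \<open>k < M\<close>] s(1)] False
        by (simp add: o_def)
    qed
  qed
qed

lemma compact_Pm: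
  assumes S: "bounded_op S"
  shows "compact_op (op_mult (Pm M) S)"
  unfolding compact_op_def
proof (intro conjI allI impI)
  show "bounded_op (op_mult (Pm M) S)" using S by (simp add: bo_mult Pm_bounded)
  fix u :: "nat \<Rightarrow> vec" assume u: "\<forall>n. u n \<in> l2 \<and> l2norm (u n) \<le> 1"
  obtain C where C: "C \<ge> 0" "\<forall>u\<in>l2. l2norm (S u) \<le> C * l2norm u" using bo_C[OF S] by blast
  have Sl: "\<And>v. S v \<in> l2" using S by (simp add: bo_l2_all)
  have bd: "cmod (S (u n) k) \<le> C" for n k
  proof -
    have "cmod (S (u n) k) \<le> l2norm (S (u n))" by (rule l2_coord_le[OF Sl])
    also have "\<dots> \<le> C * l2norm (u n)" using C u by blast
    also have "\<dots> \<le> C * 1" using u C(1) by (intro mult_left_mono) auto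
    finally show ?thesis by simp
  qed
  obtain r w where r: "strict_mono r" "\<forall>k<M. (\<lambda>n. S (u (r n)) k) \<longlonglongrightarrow> w k"
    using BW_coords[of "\<lambda>n k. S (u n) k", OF bd] by blast
  define W where "W = (\<lambda>k. if k < M then w k else 0)"
  have Wl2: "W \<in> l2" unfolding l2_iff W_def by (rule summable_finite[of "{..<M}"]) auto
  show "\<exists>r w. strict_mono r \<and> w \<in> l2 \<and> (\<lambda>n. l2norm (\<lambda>k. op_mult (Pm M) S (u (r n)) k - w k)) \<longlonglongrightarrow> 0"
  proof (intro exI conjI)
    show "strict_mono r" by fact
    show "W \<in> l2" by fact
    have e: "l2norm (\<lambda>k. op_mult (Pm M) S (u (r n)) k - W k) = sqrt (\<Sum>k<M. (cmod (S (u (r n)) k - w k))\<^sup>2)" for n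
    proof -
      have "(\<lambda>k. op_mult (Pm M) S (u (r n)) k - W k) = (\<lambda>k. if k < M then S (u (r n)) k - w k else 0)"
        by (simp add: op_mult_def Pm_apply[OF Sl] W_def fun_eq_iff)
      then have "(\<lambda>k. (cmod (op_mult (Pm M) S (u (r n)) k - W k))\<^sup>2) = (\<lambda>k. if k < M then (cmod (S (u (r n)) k - w k))\<^sup>2 else 0)"
        by (auto simp: fun_eq_iff)
      moreover have "(\<Sum>k. if k < M then (cmod (S (u (r n)) k - w k))\<^sup>2 else 0) = (\<Sum>k<M. (cmod (S (u (r n)) k - w k))\<^sup>2)"
        by (subst suminf_finite[of "{..<M}"]) auto
      ultimately have "(\<Sum>k. (cmod (op_mult (Pm M) S (u (r n)) k - W k))\<^sup>2) = (\<Sum>k<M. (cmod (S (u (r n)) k - w k))\<^sup>2)"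
        by simp
      then show ?thesis by (simp add: l2norm_def)
    qed
    have "(\<lambda>n. sqrt (\<Sum>k<M. (cmod (S (u (r n)) k - w k))\<^sup>2)) \<longlonglongrightarrow> sqrt (\<Sum>k<M. (cmod (w k - w k))\<^sup>2)"
      using r(2) by (intro tendsto_real_sqrt tendsto_sum tendsto_power tendsto_norm tendsto_diff) auto
    then show "(\<lambda>n. l2norm (\<lambda>k. op_mult (Pm M) S (u (r n)) k - W k)) \<longlonglongrightarrow> 0"
      unfolding e by simp
  qed
qed



lemma exp_set:
  fixes S :: "complex set"
  assumes "finite S"
  shows "(\<forall>\<mu>\<in>S. cmod \<mu> = 1) \<Longrightarrow> (\<lambda>k. \<Sum>\<mu>\<in>S. a \<mu> * \<mu> ^ k) \<longlonglongrightarrow> 0 \<Longrightarrow> \<forall>\<mu>\<in>S. a \<mu> = 0"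
  using assms
proof (induction S arbitrary: a rule: finite_induct)
  case empty then show ?case by simp
next
  case (insert \<nu> S)
  define s where "s = (\<lambda>k. \<Sum>\<mu>\<in>insert \<nu> S. a \<mu> * \<mu> ^ k)"
  have s0: "s \<longlonglongrightarrow> 0" using insert.prems by (simp add: s_def)
  have ts: "(\<lambda>k. s (Suc k) - \<nu> * s k) \<longlonglongrightarrow> 0 - \<nu> * 0"
    by (intro tendsto_diff tendsto_mult tendsto_const LIMSEQ_Suc s0)
  have "s (Suc k) - \<nu> * s k = (\<Sum>\<mu>\<in>S. (a \<mu> * (\<mu> - \<nu>)) * \<mu> ^ k)" for k
  proof -
    have "s (Suc k) - \<nu> * s k = (\<Sum>\<mu>\<in>S. a \<mu> * \<mu> ^ Suc k) - \<nu> * (\<Sum>\<mu>\<in>S. a \<mu> * \<mu> ^ k)"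
      using insert.hyps by (simp add: s_def algebra_simps)
    also have "\<dots> = (\<Sum>\<mu>\<in>S. (a \<mu> * (\<mu> - \<nu>)) * \<mu> ^ k)"
      by (simp add: sum_distrib_left sum_subtractf[symmetric] algebra_simps)
    finally show ?thesis .
  qed
  then have "(\<lambda>k. \<Sum>\<mu>\<in>S. (a \<mu> * (\<mu> - \<nu>)) * \<mu> ^ k) \<longlonglongrightarrow> 0" using ts by simp
  then have z: "\<forall>\<mu>\<in>S. a \<mu> * (\<mu> - \<nu>) = 0" using insert.IH[of "\<lambda>\<mu>. a \<mu> * (\<mu> - \<nu>)"] insert.prems by auto
  have zS: "\<forall>\<mu>\<in>S. a \<mu> = 0" using z insert.hyps(2) by auto
  then have "s = (\<lambda>k. a \<nu> * \<nu> ^ k)" using insert.hyps by (simp add: s_def fun_eq_iff)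
  then have "(\<lambda>k. norm (a \<nu> * \<nu> ^ k)) \<longlonglongrightarrow> 0" using tendsto_norm_zero[OF s0] by simp
  moreover have "norm (a \<nu> * \<nu> ^ k) = cmod (a \<nu>)" for k
    using insert.prems(1) by (simp add: norm_mult norm_power)
  ultimately have "(\<lambda>k. cmod (a \<nu>)) \<longlonglongrightarrow> 0" by simp
  then have "a \<nu> = 0" by (simp add: LIMSEQ_const_iff)
  then show ?case using zS by simp
qed

lemma sum_list_nth: "(\<Sum>t\<leftarrow>xs. f t) = (\<Sum>i<length xs. f (xs ! i))"
  by (simp add: sum_list_sum_nth atLeast0LessThan)

lemma exp_list:
  fixes lam b :: "'a \<Rightarrow> complex"
  assumes u: "\<And>t. t \<in> set xs \<Longrightarrow> cmod (lam t) = 1"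
    and lim: "(\<lambda>k. \<Sum>t\<leftarrow>xs. b t * lam t ^ k) \<longlonglongrightarrow> 0"
  shows "(\<Sum>t\<leftarrow>xs. b t * lam t ^ k) = 0"
proof -
  define I where "I = {..<length xs}"
  define g where "g = (\<lambda>i. lam (xs ! i))"
  define A where "A = (\<lambda>y. \<Sum>i\<in>{x. x \<in> I \<and> g x = y}. b (xs ! i))"
  have eq: "(\<Sum>t\<leftarrow>xs. b t * lam t ^ k) = (\<Sum>y\<in>g ` I. A y * y ^ k)" for k
  proof -
    have "(\<Sum>t\<leftarrow>xs. b t * lam t ^ k) = (\<Sum>i\<in>I. b (xs ! i) * g i ^ k)"
      by (simp add: sum_list_nth I_def g_def)
    also have "\<dots> = (\<Sum>y\<in>g ` I. \<Sum>i\<in>{x. x \<in> I \<and> g x = y}. b (xs ! i) * g i ^ k)"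
      by (rule sum.image_gen) (simp add: I_def)
    also have "\<dots> = (\<Sum>y\<in>g ` I. A y * y ^ k)"
      by (rule sum.cong[OF refl]) (simp add: A_def sum_distrib_right)
    finally show ?thesis .
  qed
  have un: "\<forall>\<mu>\<in>g ` I. cmod \<mu> = 1" using u by (auto simp: g_def I_def)
  have hz: "\<forall>\<mu>\<in>g ` I. A \<mu> = 0"
    by (rule exp_set) (use un lim eq in \<open>auto simp: I_def\<close>)
  have "(\<Sum>y\<in>g ` I. A y * y ^ k) = 0" by (rule sum.neutral) (use hz in auto)
  then show ?thesis using eq by simp
qed

fun tn :: "tl \<Rightarrow> nat" where "tn (c, n, m, l) = n"
fun tmm :: "tl \<Rightarrow> nat" where "tmm (c, n, m, l) = m"

lemma tapp_form: "tn t \<le> i \<Longrightarrow> tapp t v i = tco t * tla t ^ (i - tn t) * v (i - tn t + tmm t)"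
  by (cases t) (simp add: tm_def)

lemma Wl_E: "Wl cs (E j) i = (\<Sum>t\<leftarrow>cs. tapp t (E j) i)"
  by (simp add: Wl_def E_l2)

lemma compact_Wl_rows:
  assumes uc: "unitl cs" and cp: "compact_op (Wl cs)"
  shows "\<exists>M. \<forall>v\<in>l2. \<forall>i\<ge>M. Wl cs v i = 0"
proof -
  define N where "N = Suc (\<Sum>t\<leftarrow>cs. tn t + tmm t)"
  have bN: "tn t < N" "tmm t < N" if "t \<in> set cs" for t
  proof -
    have "tn t + tmm t \<in> set (map (\<lambda>t. tn t + tmm t) cs)" using that by simp
    then have "tn t + tmm t \<le> (\<Sum>t\<leftarrow>cs. tn t + tmm t)" by (rule member_le_sum_list) auto
    then show "tn t < N" "tmm t < N" by (auto simp: N_def)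
  qed
  have ut: "\<And>t. t \<in> set cs \<Longrightarrow> cmod (tla t) = 1" using uc by (simp add: unitl_def)
  have Wl2: "\<And>v. v \<in> l2 \<Longrightarrow> Wl cs v \<in> l2" using Wl_l2[OF uc] by blast
  have Z: "Wl cs (E j) i = 0" if "j > i + N" for i j
  proof -
    have "tapp t (E j) i = 0" if t: "t \<in> set cs" for t
    proof (cases "tn t \<le> i")
      case True
      have "i - tn t + tmm t < j" using bN[OF t] \<open>j > i + N\<close> by simp
      then show ?thesis using True by (simp add: tapp_form E_def)
    next
      case False then show ?thesis by (cases t) (simp add: tm_def)
    qed
    then show ?thesis by (auto simp: Wl_E sum_list_nth intro!: sum.neutral)
  qed
  have col: "(\<lambda>j. l2norm (Wl cs (E j))) \<longlonglongrightarrow> 0"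
  proof (rule ccontr)
    assume nt: "\<not> (\<lambda>j. l2norm (Wl cs (E j))) \<longlonglongrightarrow> 0"
    obtain \<epsilon> where ep: "\<epsilon> > 0" "\<forall>no. \<exists>n\<ge>no. \<not> norm (l2norm (Wl cs (E n)) - 0) < \<epsilon>"
      using nt unfolding LIMSEQ_iff by blast
    define P where "P = {n. l2norm (Wl cs (E n)) \<ge> \<epsilon>}"
    have "\<forall>m. \<exists>n\<ge>m. n \<in> P"
    proof
      fix m obtain n where "n \<ge> m" "\<not> norm (l2norm (Wl cs (E n)) - 0) < \<epsilon>" using ep by blast
      moreover have "l2norm (Wl cs (E n)) \<ge> 0" using l2norm_nonneg[OF Wl2[OF E_l2]] .
      ultimately show "\<exists>n\<ge>m. n \<in> P" by (auto simp: P_def)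
    qed
    then have inf: "infinite P" by (simp add: infinite_nat_iff_unbounded_le)
    define s where "s = enumerate P"
    have s: "strict_mono s" "\<And>n. s n \<in> P" using inf by (auto simp: s_def strict_mono_enumerate enumerate_in_set)
    have uE: "\<forall>n. E (s n) \<in> l2 \<and> l2norm (E (s n)) \<le> 1" by (simp add: E_l2 E_norm)
    note H = conjunct2[OF cp[unfolded compact_op_def]]
    have uE': "\<forall>n. (\<lambda>n. E (s n)) n \<in> l2 \<and> l2norm ((\<lambda>n. E (s n)) n) \<le> 1" using uE by simp
    have ex: "\<exists>r w. strict_mono r \<and> w \<in> l2 \<and> (\<lambda>n. l2norm (\<lambda>k. Wl cs (E (s (r n))) k - w k)) \<longlonglongrightarrow> 0"
      using mp[OF spec[OF H, of "\<lambda>n. E (s n)"] uE'] by simp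
    then obtain r w where r: "strict_mono r" "w \<in> l2" "(\<lambda>n. l2norm (\<lambda>k. Wl cs (E (s (r n))) k - w k)) \<longlonglongrightarrow> 0"
      by blast
    have w0: "w i = 0" for i
    proof -
      have dl: "(\<lambda>k. Wl cs (E (s (r n))) k - w k) \<in> l2" for n
        using l2_lin(1)[OF Wl2[OF E_l2] r(2), where c="-1"] by simp
      have c1: "(\<lambda>n. Wl cs (E (s (r n))) i - w i) \<longlonglongrightarrow> 0"
      proof (rule Lim_null_comparison[OF _ r(3)])
        show "\<forall>\<^sub>F n in sequentially. norm (Wl cs (E (s (r n))) i - w i) \<le> l2norm (\<lambda>k. Wl cs (E (s (r n))) k - w k)"
          using l2_coord_le[OF dl] by simp
      qed
      have sr: "strict_mono (s \<circ> r)" using s(1) r(1) by (rule strict_mono_o)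
      have ev: "\<forall>\<^sub>F n in sequentially. Wl cs (E (s (r n))) i - w i = 0 - w i"
      proof (rule eventually_sequentiallyI[of "Suc (i + N)"])
        fix n assume "n \<ge> Suc (i + N)"
        then have "s (r n) > i + N" using seq_suble[OF sr, of n] by simp
        then show "Wl cs (E (s (r n))) i - w i = 0 - w i" using Z by simp
      qed
      have "(\<lambda>n. 0 - w i) \<longlonglongrightarrow> 0" using c1 tendsto_cong[OF ev] by simp
      then show ?thesis by (simp add: LIMSEQ_const_iff)
    qed
    have "(\<lambda>n. l2norm (Wl cs (E (s (r n))))) \<longlonglongrightarrow> 0" using r(3) w0 by simp
    then have "\<forall>\<^sub>F n in sequentially. l2norm (Wl cs (E (s (r n)))) < \<epsilon>"
      using ep(1) by (rule order_tendstoD(2))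
    then obtain n where "l2norm (Wl cs (E (s (r n)))) < \<epsilon>" by (auto simp: eventually_sequentially)
    moreover have "s (r n) \<in> P" by (rule s(2))
    ultimately show False by (simp add: P_def)
  qed
  have D0: "Wl cs (E (k + N + q)) (k + N + p) = 0" for p q k
  proof -
    define b where "b = (\<lambda>t. if p + tmm t = q + tn t then tco t * tla t ^ (N + p - tn t) else 0)"
    have form: "Wl cs (E (k + N + q)) (k + N + p) = (\<Sum>t\<leftarrow>cs. b t * tla t ^ k)" for k
    proof -
      have "tapp t (E (k + N + q)) (k + N + p) = b t * tla t ^ k" if t: "t \<in> set cs" for t
      proof -
        have n: "tn t < N" "tmm t < N" using bN[OF t] by auto
        have e1: "k + N + p - tn t = k + (N + p - tn t)" using n by simp
        have e2: "(k + N + p - tn t + tmm t = k + N + q) \<longleftrightarrow> (p + tmm t = q + tn t)" using n by auto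
        have e3: "(k + (N + p) + tmm t - tn t = k + N + q) \<longleftrightarrow> (p + tmm t = q + tn t)" using n by auto
        have e4: "k + (N + p) - tn t = k + (N + p - tn t)" using n by simp
        have "tapp t (E (k + N + q)) (k + N + p) = tco t * tla t ^ (k + (N + p - tn t)) * E (k + N + q) (k + N + p - tn t + tmm t)"
          using n by (subst tapp_form) (simp_all add: e1)
        also have "\<dots> = b t * tla t ^ k"
          by (cases "p + tmm t = q + tn t") (simp_all add: E_def b_def e2 power_add mult_ac)
        finally show ?thesis .
      qed
      then show ?thesis by (simp add: Wl_E cong: map_cong)
    qed
    have lim: "(\<lambda>k. \<Sum>t\<leftarrow>cs. b t * tla t ^ k) \<longlonglongrightarrow> 0"
    proof (rule Lim_null_comparison)
      show "\<forall>\<^sub>F k in sequentially. norm (\<Sum>t\<leftarrow>cs. b t * tla t ^ k) \<le> l2norm (Wl cs (E (k + (N + q))))"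
      proof (intro always_eventually allI)
        fix k
        have "cmod (Wl cs (E (k + N + q)) (k + N + p)) \<le> l2norm (Wl cs (E (k + N + q)))"
          by (rule l2_coord_le[OF Wl2[OF E_l2]])
        then show "norm (\<Sum>t\<leftarrow>cs. b t * tla t ^ k) \<le> l2norm (Wl cs (E (k + (N + q))))"
          using form[of k] by (simp add: add.assoc)
      qed
      show "(\<lambda>k. l2norm (Wl cs (E (k + (N + q))))) \<longlonglongrightarrow> 0"
        using LIMSEQ_ignore_initial_segment[OF col] by simp
    qed
    show ?thesis using exp_list[OF ut lim] form by simp
  qed
  have Z2: "Wl cs (E j) i = 0" if "i \<ge> N" "j \<ge> N" for i j
  proof (cases "j \<le> i")
    case True
    then show ?thesis using D0[of "j - N" 0 "i - j"] that by simp
  next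
    case False
    then show ?thesis using D0[of "i - N" "j - i" 0] that by simp
  qed
  show ?thesis
  proof (intro exI[of _ "2 * N"] ballI allI impI)
    fix v i assume v: "v \<in> l2" and i: "i \<ge> 2 * N"
    define I where "I = {..<length cs}"
    define g where "g = (\<lambda>x. i - tn (cs ! x) + tmm (cs ! x))"
    define co where "co = (\<lambda>x. tco (cs ! x) * tla (cs ! x) ^ (i - tn (cs ! x)))"
    have inI: "x \<in> I \<Longrightarrow> cs ! x \<in> set cs" for x by (simp add: I_def)
    have le: "x \<in> I \<Longrightarrow> tn (cs ! x) \<le> i" for x using bN[OF inI] i by fastforce
    have "Wl cs v i = (\<Sum>x\<in>I. tapp (cs ! x) v i)" using v by (simp add: Wl_def sum_list_nth I_def)
    also have "\<dots> = (\<Sum>x\<in>I. co x * v (g x))"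
      by (rule sum.cong[OF refl]) (simp add: tapp_form[OF le] co_def g_def)
    also have "\<dots> = (\<Sum>y\<in>g ` I. \<Sum>x\<in>{x. x \<in> I \<and> g x = y}. co x * v (g x))"
      by (rule sum.image_gen) (simp add: I_def)
    also have "\<dots> = 0"
    proof (rule sum.neutral, rule ballI)
      fix y assume y: "y \<in> g ` I"
      then obtain x0 where x0: "x0 \<in> I" "y = g x0" by blast
      have yN: "y \<ge> N" using x0 bN[OF inI[OF x0(1)]] i by (simp add: g_def)
      have "Wl cs (E y) i = (\<Sum>x\<in>I. tapp (cs ! x) (E y) i)" by (simp add: Wl_E sum_list_nth I_def)
      also have "\<dots> = (\<Sum>x\<in>I. if g x = y then co x else 0)"
        by (rule sum.cong[OF refl]) (simp add: tapp_form[OF le] co_def g_def E_def)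
      also have "\<dots> = (\<Sum>x\<in>{x. x \<in> I \<and> g x = y}. co x)"
        by (simp add: sum.inter_filter[symmetric] I_def)
      finally have "(\<Sum>x\<in>{x. x \<in> I \<and> g x = y}. co x) = 0" using Z2[OF _ yN, of i] i by simp
      then have "(\<Sum>x\<in>{x. x \<in> I \<and> g x = y}. co x) * v y = 0" by simp
      then show "(\<Sum>x\<in>{x. x \<in> I \<and> g x = y}. co x * v (g x)) = 0"
        by (simp add: sum_distrib_right)
    qed
    finally show "Wl cs v i = 0" .
  qed
qed



theorem proposition4p1:
  fixes x1 :: "'g::{topological_ab_group_add, t2_space}"
    and d :: "op \<Rightarrow> op"
  assumes "compact (UNIV :: 'g set)"
    and "infinite (UNIV :: 'g set)"
    and "closure (range (\<lambda>k::int. intmul k x1)) = UNIV"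
    and "is_derivation (alg_calA x1) (alg_A x1) d"
  shows "d ` (alg_calA x1 \<inter> compact_ops) \<subseteq> compact_ops"
proof
  fix y assume "y \<in> d ` (alg_calA x1 \<inter> compact_ops)"
  then obtain T where T: "T \<in> alg_calA x1" "compact_op T" and y: "y = d T"
    by (auto simp: compact_ops_def)
  obtain cs where cs: "unitl cs" "T = Wl cs" using rep[OF T(1)] by blast
  obtain M where M: "\<forall>v\<in>l2. \<forall>i\<ge>M. Wl cs v i = 0"
    using compact_Wl_rows[OF cs(1)] T(2) cs(2) by blast
  have bT: "bounded_op T" using T(2) by (rule compact_bo)
  have TP: "T = op_mult (Pm M) T"
  proof (rule ext)
    fix v show "T v = op_mult (Pm M) T v"
    proof (cases "v \<in> l2")
      case True
      have "Pm M (T v) = T v" using M True cs(2) by (auto simp: Pm_apply[OF bo_l2[OF bT True]] fun_eq_iff)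
      then show ?thesis by (simp add: op_mult_def)
    next
      case False
      have "T v = zerovec" using bo_out[OF bT False] .
      moreover have "Pm M zerovec = zerovec" using Pm_apply[OF zerovec_l2, of M] by (simp add: zerovec_def fun_eq_iff)
      ultimately show ?thesis by (simp add: op_mult_def)
    qed
  qed
  have der: "is_derivation (alg_calA x1) (alg_A x1) d" by fact
  have PA: "Pm M \<in> alg_calA x1" by (rule Pm_in)
  have "d (op_mult (Pm M) T) = op_add (op_mult (Pm M) (d T)) (op_mult (d (Pm M)) T)"
    using der PA T(1) unfolding is_derivation_def by blast
  then have dT: "d T = op_add (op_mult (Pm M) (d T)) (op_mult (d (Pm M)) T)"
    using arg_cong[of _ _ d, OF TP] by simp
  have bd: "bounded_op (d a)" if "a \<in> alg_calA x1" for a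
    using der that unfolding is_derivation_def alg_A_def cstar_gen_def by blast
  have "compact_op (op_add (op_mult (Pm M) (d T)) (op_mult (d (Pm M)) T))"
    by (rule compact_add[OF compact_Pm[OF bd[OF T(1)]] compact_mult_left[OF bd[OF PA] T(2)]])
  then show "y \<in> compact_ops" using dT y by (simp add: compact_ops_def)
qed


end
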